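(* Let $T$ be a $\delta$-Jordan Lie supertriple system and $N:T\to T$ a Nijenhuis operator for $T$. Define $$\psi(x_1,x_2,x_3)=(-1)^{|x_1|(|x_2|+|x_3|)}\theta(x_2,x_3)Nx_1-\delta(-1)^{|x_2||x_3|}\theta(x_1,x_3)Nx_2+\delta D(x_1,x_2)Nx_3-N[x_1,x_2,x_3].$$ Then $[x_1,x_2,x_3]_\lambda=[x_1,x_2,x_3]+\lambda\psi(x_1,x_2,x_3)$ ($\lambda$ a formal variable) defines a deformation of $T$, i.e. $T$ with $[\cdot,\cdot,\cdot]_\lambda$ is a $\delta$-Jordan Lie supertriple system, and this deformation is trivial.
   Context: A $\delta$-Jordan Lie supertriple system ($\delta\in\{1,-1\}$) is a $\mathbb{Z}_2$-graded vector space $T$ with a trilinear product $[\cdot,\cdot,\cdot]$ such that, for all homogeneous $a,b,c,d,e$ (with $|a|$ the degree of $a$): $|[a,b,c]|=|a|+|b|+|c|$; $[b,a,c]=-\delta(-1)^{|a||b|}[a,b,c]$; $(-1)^{|a||c|}[a,b,c]+(-1)^{|b||a|}[b,c,a]+(-1)^{|c||b|}[c,a,b]=0$; and $[a,b,[c,d,e]]=[[a,b,c],d,e]+(-1)^{|c|(|a|+|b|)}[c,[a,b,d],e]+\delta(-1)^{(|a|+|b|)(|c|+|d|)}[c,d,[a,b,e]]$. Here $\theta(a,b)(x)=(-1)^{|x|(|a|+|b|)}[x,a,b]$ and $D(a,b)(x)=\delta[a,b,x]$ (the adjoint representation). A linear operator $N:T\to T$ is a Nijenhuis operator if for all $x_1,x_2,x_3\in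 T$: $[Nx_1,Nx_2,Nx_3]=0$ and $N^2[x_1,x_2,x_3]=N[Nx_1,x_2,x_3]+N[x_1,Nx_2,x_3]+N[x_1,x_2,Nx_3]-[Nx_1,Nx_2,x_3]-[x_1,Nx_2,Nx_3]-[Nx_1,x_2,Nx_3]$. A deformation $[\cdot,\cdot,\cdot]_\lambda$ is trivial if there is a linear map $N':T\to T$ such that for all $\lambda$, $\varphi_\lambda=id+\lambda N'$ satisfies $\varphi_\lambda[x_1,x_2,x_3]_\lambda=[\varphi_\lambda x_1,\varphi_\lambda x_2,\varphi_\lambda x_3]$ for all $x_1,x_2,x_3\in T$. *)

theory Defs
  imports Main "HOL.Vector_Spaces"
begin

text \<open>A Z2-graded vector space over the field 'k is modelled by a vector space
  structure scale on the type 'v together with two subspaces T0 (even part) and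
  T1 (odd part) such that the whole space is their direct sum.
  Degrees are natural numbers taken modulo 2.\<close>

definition lin_subspace :: "('k::field \<Rightarrow> 'v::ab_group_add \<Rightarrow> 'v) \<Rightarrow> 'v set \<Rightarrow> bool" where
  "lin_subspace scale S \<longleftrightarrow> 0 \<in> S \<and> (\<forall>x\<in>S. \<forall>y\<in>S. x + y \<in> S) \<and> (\<forall>c. \<forall>x\<in>S. scale c x \<in> S)"

definition graded_space :: "('k::field \<Rightarrow> 'v::ab_group_add \<Rightarrow> 'v) \<Rightarrow> 'v set \<Rightarrow> 'v set \<Rightarrow> bool" where
  "graded_space scale T0 T1 \<longleftrightarrow>
     vector_space scale \<and> lin_subspace scale T0 \<and> lin_subspace scale T1 \<and>
     T0 \<inter> T1 = {0} \<and> (\<forall>v. \<exists>a\<in>T0. \<exists>b\<in>T1. v = a + b)"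

definition gcomp :: "'v set \<Rightarrow> 'v set \<Rightarrow> nat \<Rightarrow> 'v set" where
  "gcomp T0 T1 d = (if even d then T0 else T1)"

definition gproj :: "'v::ab_group_add set \<Rightarrow> 'v set \<Rightarrow> nat \<Rightarrow> 'v \<Rightarrow> 'v" where
  "gproj T0 T1 d v = (THE a. a \<in> gcomp T0 T1 d \<and> v - a \<in> gcomp T0 T1 (Suc d))"

abbreviation sg :: "nat \<Rightarrow> 'k::field" where
  "sg n \<equiv> (-1) ^ n"

definition trilinear :: "('k::field \<Rightarrow> 'v::ab_group_add \<Rightarrow> 'v) \<Rightarrow> ('v \<Rightarrow> 'v \<Rightarrow> 'v \<Rightarrow> 'v) \<Rightarrow> bool" where
  "trilinear scale br \<longleftrightarrow>
     (\<forall>b c. Vector_Spaces.linear scale scale (\<lambda>a. br a b c)) \<and>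
     (\<forall>a c. Vector_Spaces.linear scale scale (\<lambda>b. br a b c)) \<and>
     (\<forall>a b. Vector_Spaces.linear scale scale (\<lambda>c. br a b c))"

definition JLSTS :: "('k::field \<Rightarrow> 'v::ab_group_add \<Rightarrow> 'v) \<Rightarrow> 'v set \<Rightarrow> 'v set \<Rightarrow> 'k
    \<Rightarrow> ('v \<Rightarrow> 'v \<Rightarrow> 'v \<Rightarrow> 'v) \<Rightarrow> bool" where
  "JLSTS scale T0 T1 \<delta> br \<longleftrightarrow>
     graded_space scale T0 T1 \<and> (\<delta> = 1 \<or> \<delta> = -1) \<and> trilinear scale br \<and>
     (\<forall>i j k a b c. a \<in> gcomp T0 T1 i \<longrightarrow> b \<in> gcomp T0 T1 j \<longrightarrow> c \<in> gcomp T0 T1 k \<longrightarrow>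
        br a b c \<in> gcomp T0 T1 (i + j + k) \<and>
        br b a c = - (\<delta> * sg (i * j)) *\<^sub>s br a b c \<and>
        (sg (i * k)) *\<^sub>s br a b c + (sg (j * i)) *\<^sub>s br b c a + (sg (k * j)) *\<^sub>s br c a b = 0) \<and>
     (\<forall>i j k l m a b c d e. a \<in> gcomp T0 T1 i \<longrightarrow> b \<in> gcomp T0 T1 j \<longrightarrow> c \<in> gcomp T0 T1 k \<longrightarrow>
        d \<in> gcomp T0 T1 l \<longrightarrow> e \<in> gcomp T0 T1 m \<longrightarrow>
        br a b (br c d e) = br (br a b c) d e + (sg (k * (i + j))) *\<^sub>s br c (br a b d) e
          + (\<delta> * sg ((i + j) * (k + l))) *\<^sub>s br c d (br a b e))"
  for scale (infixr "*\<^sub>s" 75)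

definition nijenhuis :: "('k::field \<Rightarrow> 'v::ab_group_add \<Rightarrow> 'v) \<Rightarrow> ('v \<Rightarrow> 'v \<Rightarrow> 'v \<Rightarrow> 'v) \<Rightarrow> ('v \<Rightarrow> 'v) \<Rightarrow> bool" where
  "nijenhuis scale br N \<longleftrightarrow> Vector_Spaces.linear scale scale N \<and>
     (\<forall>x1 x2 x3. br (N x1) (N x2) (N x3) = 0 \<and>
        N (N (br x1 x2 x3)) = N (br (N x1) x2 x3) + N (br x1 (N x2) x3) + N (br x1 x2 (N x3))
          - br (N x1) (N x2) x3 - br x1 (N x2) (N x3) - br (N x1) x2 (N x3))"

definition theta_op :: "('k::field \<Rightarrow> 'v::ab_group_add \<Rightarrow> 'v) \<Rightarrow> ('v \<Rightarrow> 'v \<Rightarrow> 'v \<Rightarrow> 'v)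
    \<Rightarrow> nat \<Rightarrow> nat \<Rightarrow> 'v \<Rightarrow> 'v \<Rightarrow> nat \<Rightarrow> 'v \<Rightarrow> 'v" where
  "theta_op scale br da db a b dx x = scale (sg (dx * (da + db))) (br x a b)"

definition D_op :: "('k::field \<Rightarrow> 'v::ab_group_add \<Rightarrow> 'v) \<Rightarrow> 'k \<Rightarrow> ('v \<Rightarrow> 'v \<Rightarrow> 'v \<Rightarrow> 'v)
    \<Rightarrow> 'v \<Rightarrow> 'v \<Rightarrow> 'v \<Rightarrow> 'v" where
  "D_op scale \<delta> br a b x = scale \<delta> (br a b x)"

text \<open>psi on homogeneous x1,x2,x3 of degrees i,j,k (N is an even operator, so N xr has
  the same degree as xr).\<close>
definition psi_hom :: "('k::field \<Rightarrow> 'v::ab_group_add \<Rightarrow> 'v) \<Rightarrow> 'k \<Rightarrow> ('v \<Rightarrow> 'v \<Rightarrow> 'v \<Rightarrow> 'v)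
    \<Rightarrow> ('v \<Rightarrow> 'v) \<Rightarrow> nat \<Rightarrow> nat \<Rightarrow> nat \<Rightarrow> 'v \<Rightarrow> 'v \<Rightarrow> 'v \<Rightarrow> 'v" where
  "psi_hom scale \<delta> br N i j k x1 x2 x3 =
     scale (sg (i * (j + k))) (theta_op scale br j k x2 x3 i (N x1))
     - scale (\<delta> * sg (j * k)) (theta_op scale br i k x1 x3 j (N x2))
     + scale \<delta> (D_op scale \<delta> br x1 x2 (N x3))
     - N (br x1 x2 x3)"

definition psi :: "('k::field \<Rightarrow> 'v::ab_group_add \<Rightarrow> 'v) \<Rightarrow> 'v set \<Rightarrow> 'v set \<Rightarrow> 'k
    \<Rightarrow> ('v \<Rightarrow> 'v \<Rightarrow> 'v \<Rightarrow> 'v) \<Rightarrow> ('v \<Rightarrow> 'v) \<Rightarrow> 'v \<Rightarrow> 'v \<Rightarrow> 'v \<Rightarrow> 'v" where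
  "psi scale T0 T1 \<delta> br N x1 x2 x3 =
     (\<Sum>i\<in>{0,1::nat}. \<Sum>j\<in>{0,1::nat}. \<Sum>k\<in>{0,1::nat}.
        psi_hom scale \<delta> br N i j k (gproj T0 T1 i x1) (gproj T0 T1 j x2) (gproj T0 T1 k x3))"

definition deformed :: "('k::field \<Rightarrow> 'v::ab_group_add \<Rightarrow> 'v) \<Rightarrow> 'v set \<Rightarrow> 'v set \<Rightarrow> 'k
    \<Rightarrow> ('v \<Rightarrow> 'v \<Rightarrow> 'v \<Rightarrow> 'v) \<Rightarrow> ('v \<Rightarrow> 'v) \<Rightarrow> 'k \<Rightarrow> 'v \<Rightarrow> 'v \<Rightarrow> 'v \<Rightarrow> 'v" where
  "deformed scale T0 T1 \<delta> br N lam x1 x2 x3 =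
     br x1 x2 x3 + scale lam (psi scale T0 T1 \<delta> br N x1 x2 x3)"

definition trivial_deformation :: "('k::field \<Rightarrow> 'v::ab_group_add \<Rightarrow> 'v)
    \<Rightarrow> ('v \<Rightarrow> 'v \<Rightarrow> 'v \<Rightarrow> 'v) \<Rightarrow> ('k \<Rightarrow> 'v \<Rightarrow> 'v \<Rightarrow> 'v \<Rightarrow> 'v) \<Rightarrow> bool" where
  "trivial_deformation scale br brl \<longleftrightarrow>
     (\<exists>N'. Vector_Spaces.linear scale scale N' \<and>
        (\<forall>lam x1 x2 x3. let \<phi> = (\<lambda>x. x + scale lam (N' x)) in
           \<phi> (brl lam x1 x2 x3) = br (\<phi> x1) (\<phi> x2) (\<phi> x3)))"

end

theory Submission
  imports Defs
begin

definition Pf :: "('v::ab_group_add \<Rightarrow> 'v \<Rightarrow> 'v \<Rightarrow> 'v) \<Rightarrow> ('v \<Rightarrow> 'v) \<Rightarrow> 'v \<Rightarrow> 'v \<Rightarrow> 'v \<Rightarrow> 'v" where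
  "Pf br N x y z = br (N x) y z + br x (N y) z + br x y (N z) - N (br x y z)"

definition J2 :: "('k::field \<Rightarrow> 'v::ab_group_add \<Rightarrow> 'v) \<Rightarrow> 'k \<Rightarrow> ('v \<Rightarrow> 'v \<Rightarrow> 'v \<Rightarrow> 'v) \<Rightarrow> ('v \<Rightarrow> 'v \<Rightarrow> 'v \<Rightarrow> 'v)
   \<Rightarrow> nat \<Rightarrow> nat \<Rightarrow> nat \<Rightarrow> nat \<Rightarrow> 'v \<Rightarrow> 'v \<Rightarrow> 'v \<Rightarrow> 'v \<Rightarrow> 'v \<Rightarrow> 'v" where
  "J2 scale \<delta> X Y i j k l a b c d e = X a b (Y c d e) - X (Y a b c) d e
     - scale (sg (k * (i + j))) (X c (Y a b d) e) - scale (\<delta> * sg ((i + j) * (k + l))) (X c d (Y a b e))"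

lemma sg_sq: "(sg n :: 'k::field) * sg n = 1"
  by (simp add: power_add[symmetric] power_mult[symmetric])

lemma sg_coef: "(sg (j*k) :: 'k::field) * sg (j*(i+k)) * sg (i*j) = 1"
proof -
  have "(sg (j*k) :: 'k) * sg (j*(i+k)) * sg (i*j) = sg (2*(j*k+i*j))"
    by (simp add: power_add[symmetric] algebra_simps)
  also have "\<dots> = 1" by (simp add: power_mult)
  finally show ?thesis .
qed

context
  fixes scale :: "'k::field \<Rightarrow> 'v::ab_group_add \<Rightarrow> 'v" (infixr "*s" 75)
    and T0 T1 :: "'v set" and \<delta> :: 'k
    and br :: "'v \<Rightarrow> 'v \<Rightarrow> 'v \<Rightarrow> 'v" and N :: "'v \<Rightarrow> 'v"
  assumes J: "JLSTS scale T0 T1 \<delta> br" and nj: "nijenhuis scale br N"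
    and NT0: "N ` T0 \<subseteq> T0" and NT1: "N ` T1 \<subseteq> T1"
begin

lemma gs: "graded_space scale T0 T1" using J unfolding JLSTS_def by blast
lemma vs: "vector_space scale" using gs unfolding graded_space_def by blast
lemma tri: "trilinear scale br" using J unfolding JLSTS_def by blast
lemma linN: "Vector_Spaces.linear scale scale N" using nj unfolding nijenhuis_def by blast
lemma dpm: "\<delta> = 1 \<or> \<delta> = -1" using J unfolding JLSTS_def by blast
lemma dsq: "\<delta> * \<delta> = 1" using dpm by auto
lemma nij: "N (N (br x y z)) = N (br (N x) y z) + N (br x (N y) z) + N (br x y (N z))
          - br (N x) (N y) z - br x (N y) (N z) - br (N x) y (N z)"
  using nj unfolding nijenhuis_def by blast
lemma N3: "br (N x) (N y) (N z) = 0" using nj unfolding nijenhuis_def by blast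

lemma hom3:
  assumes "a \<in> gcomp T0 T1 i" "b \<in> gcomp T0 T1 j" "c \<in> gcomp T0 T1 k"
  shows "br a b c \<in> gcomp T0 T1 (i + j + k)"
    "br b a c = - (\<delta> * sg (i * j)) *s br a b c"
    "(sg (i * k)) *s br a b c + (sg (j * i)) *s br b c a + (sg (k * j)) *s br c a b = 0"
  using J assms unfolding JLSTS_def by blast+

lemma FI:
  assumes "a \<in> gcomp T0 T1 i" "b \<in> gcomp T0 T1 j" "c \<in> gcomp T0 T1 k"
    "d \<in> gcomp T0 T1 l" "e \<in> gcomp T0 T1 m"
  shows "J2 scale \<delta> br br i j k l a b c d e = 0"
proof -
  have "br a b (br c d e) = br (br a b c) d e + (sg (k * (i + j))) *s br c (br a b d) e
          + (\<delta> * sg ((i + j) * (k + l))) *s br c d (br a b e)"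
    using J assms unfolding JLSTS_def by blast
  then show ?thesis unfolding J2_def by (simp add: algebra_simps)
qed

interpretation vector_space scale by (rule vs)

lemma mh1: "module_hom scale scale (\<lambda>a. br a b c)" using tri unfolding trilinear_def module_hom_iff_linear by blast
lemma mh2: "module_hom scale scale (\<lambda>a. br b a c)" using tri unfolding trilinear_def module_hom_iff_linear by blast
lemma mh3: "module_hom scale scale (\<lambda>a. br b c a)" using tri unfolding trilinear_def module_hom_iff_linear by blast
lemma mhN: "module_hom scale scale N" using linN unfolding module_hom_iff_linear by blast

lemmas lin_rules = module_hom.add[OF mh1] module_hom.add[OF mh2] module_hom.add[OF mh3] module_hom.add[OF mhN]
  module_hom.diff[OF mh1] module_hom.diff[OF mh2] module_hom.diff[OF mh3] module_hom.diff[OF mhN]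
  module_hom.neg[OF mh1] module_hom.neg[OF mh2] module_hom.neg[OF mh3] module_hom.neg[OF mhN]
  module_hom.scale[OF mh1] module_hom.scale[OF mh2] module_hom.scale[OF mh3] module_hom.scale[OF mhN]
  module_hom.zero[OF mh1] module_hom.zero[OF mh2] module_hom.zero[OF mh3] module_hom.zero[OF mhN]

lemma omega1:
  "J2 scale \<delta> br (Pf br N) i j k l a b c d e + J2 scale \<delta> (Pf br N) br i j k l a b c d e =
   J2 scale \<delta> br br i j k l (N a) b c d e + J2 scale \<delta> br br i j k l a (N b) c d e
   + J2 scale \<delta> br br i j k l a b (N c) d e + J2 scale \<delta> br br i j k l a b c (N d) e
   + J2 scale \<delta> br br i j k l a b c d (N e) - N (J2 scale \<delta> br br i j k l a b c d e)"
  unfolding J2_def Pf_def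
  by (simp add: lin_rules algebra_simps)

lemma omega2:
  "J2 scale \<delta> (Pf br N) (Pf br N) i j k l a b c d e
   + N (J2 scale \<delta> br (Pf br N) i j k l a b c d e + J2 scale \<delta> (Pf br N) br i j k l a b c d e) =
   J2 scale \<delta> br br i j k l (N a) (N b) c d e + J2 scale \<delta> br br i j k l (N a) b (N c) d e
   + J2 scale \<delta> br br i j k l (N a) b c (N d) e + J2 scale \<delta> br br i j k l (N a) b c d (N e)
   + J2 scale \<delta> br br i j k l a (N b) (N c) d e + J2 scale \<delta> br br i j k l a (N b) c (N d) e
   + J2 scale \<delta> br br i j k l a (N b) c d (N e) + J2 scale \<delta> br br i j k l a b (N c) (N d) e
   + J2 scale \<delta> br br i j k l a b (N c) d (N e) + J2 scale \<delta> br br i j k l a b c (N d) (N e)"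
  unfolding J2_def Pf_def
  by (simp add: lin_rules nij algebra_simps)

lemma sub_gc: "lin_subspace scale (gcomp T0 T1 d)"
  using gs unfolding graded_space_def gcomp_def by auto

lemma gc_add: "x \<in> gcomp T0 T1 d \<Longrightarrow> y \<in> gcomp T0 T1 d \<Longrightarrow> x + y \<in> gcomp T0 T1 d"
  using sub_gc unfolding lin_subspace_def by blast
lemma gc_scale: "x \<in> gcomp T0 T1 d \<Longrightarrow> c *s x \<in> gcomp T0 T1 d"
  using sub_gc unfolding lin_subspace_def by blast
lemma gc_neg: "x \<in> gcomp T0 T1 d \<Longrightarrow> - x \<in> gcomp T0 T1 d"
proof -
  assume "x \<in> gcomp T0 T1 d"
  then have "(-1) *s x \<in> gcomp T0 T1 d" by (rule gc_scale)
  moreover have "(-1) *s x = - x" by (simp only: scale_minus_left scale_one)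
  ultimately show ?thesis by (simp only:)
qed
lemma gc_diff: "x \<in> gcomp T0 T1 d \<Longrightarrow> y \<in> gcomp T0 T1 d \<Longrightarrow> x - y \<in> gcomp T0 T1 d"
  unfolding diff_conv_add_uminus by (rule gc_add, assumption, rule gc_neg)
lemma gc_N: "x \<in> gcomp T0 T1 d \<Longrightarrow> N x \<in> gcomp T0 T1 d"
  using NT0 NT1 unfolding gcomp_def by (auto split: if_splits)

lemma gproj_unique:
  assumes "a \<in> gcomp T0 T1 d" "v - a \<in> gcomp T0 T1 (Suc d)"
  shows "gproj T0 T1 d v = a"
  unfolding gproj_def
proof (rule the_equality)
  show "a \<in> gcomp T0 T1 d \<and> v - a \<in> gcomp T0 T1 (Suc d)" using assms by blast
next
  fix a' assume h: "a' \<in> gcomp T0 T1 d \<and> v - a' \<in> gcomp T0 T1 (Suc d)"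
  have "a' - a \<in> gcomp T0 T1 d" using h assms gc_diff by blast
  moreover have "(v - a) - (v - a') \<in> gcomp T0 T1 (Suc d)" using h assms gc_diff by blast
  moreover have "(v - a) - (v - a') = a' - a" by simp
  ultimately have "a' - a \<in> T0 \<inter> T1" unfolding gcomp_def by (cases "even d") auto
  moreover have "T0 \<inter> T1 = {0}" using gs unfolding graded_space_def by blast
  ultimately have "a' - a = 0" by blast
  then show "a' = a" by simp
qed

lemma decomp: "\<exists>a b. a \<in> T0 \<and> b \<in> T1 \<and> gproj T0 T1 0 v = a \<and> gproj T0 T1 1 v = b \<and> v = a + b"
proof -
  obtain a b where ab: "a \<in> T0" "b \<in> T1" "v = a + b" using gs unfolding graded_space_def by blast
  have "gproj T0 T1 0 v = a" by (rule gproj_unique) (use ab in \<open>auto simp: gcomp_def\<close>)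
  moreover have "gproj T0 T1 1 v = b" by (rule gproj_unique) (use ab in \<open>auto simp: gcomp_def\<close>)
  ultimately show ?thesis using ab by blast
qed

lemma psi_hom_eq:
  assumes "a \<in> gcomp T0 T1 i" "b \<in> gcomp T0 T1 j" "c \<in> gcomp T0 T1 k"
  shows "psi_hom scale \<delta> br N i j k a b c = Pf br N a b c"
proof -
  have as: "br (N b) a c = - (\<delta> * sg (i * j)) *s br a (N b) c"
    using hom3(2)[OF assms(1) gc_N[OF assms(2)] assms(3)] .
  have c1: "(\<delta> * sg (j * k)) * (sg (j * (i + k)) * (\<delta> * sg (i * j))) = 1"
  proof -
    have "(\<delta> * sg (j * k)) * (sg (j * (i + k)) * (\<delta> * sg (i * j))) =
      (\<delta> * \<delta>) * (sg (j * k) * sg (j * (i + k)) * sg (i * j))"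
      by (simp only: mult_ac)
    also have "\<dots> = 1" by (simp only: dsq sg_coef mult_1_left)
    finally show ?thesis .
  qed
  have t1: "sg (i * (j + k)) *s (sg (i * (j + k)) *s br (N a) b c) = br (N a) b c"
    by (simp only: scale_scale sg_sq scale_one)
  have t2: "(\<delta> * sg (j * k)) *s (sg (j * (i + k)) *s br (N b) a c) = - br a (N b) c"
  proof -
    have "(\<delta> * sg (j * k)) *s (sg (j * (i + k)) *s br (N b) a c)
      = ((\<delta> * sg (j * k)) * (sg (j * (i + k)) * (\<delta> * sg (i * j)))) *s (- br a (N b) c)"
      unfolding as by (simp only: scale_scale scale_minus_left scale_minus_right)
    then show ?thesis by (simp only: c1 scale_one)
  qed
  have t3: "\<delta> *s (\<delta> *s br a b (N c)) = br a b (N c)"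
    by (simp only: scale_scale dsq scale_one)
  show ?thesis
    unfolding psi_hom_def theta_op_def D_op_def Pf_def
    by (simp only: t1 t2 t3 diff_minus_eq_add)
qed

lemma psi_eq: "psi scale T0 T1 \<delta> br N x y z = Pf br N x y z"
proof -
  obtain x0 x1 where x: "x0 \<in> T0" "x1 \<in> T1" "gproj T0 T1 0 x = x0" "gproj T0 T1 1 x = x1" "x = x0 + x1"
    using decomp by blast
  obtain y0 y1 where y: "y0 \<in> T0" "y1 \<in> T1" "gproj T0 T1 0 y = y0" "gproj T0 T1 1 y = y1" "y = y0 + y1"
    using decomp by blast
  obtain z0 z1 where z: "z0 \<in> T0" "z1 \<in> T1" "gproj T0 T1 0 z = z0" "gproj T0 T1 1 z = z1" "z = z0 + z1"
    using decomp by blast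
  have g0: "gcomp T0 T1 0 = T0" and g1: "gcomp T0 T1 (Suc 0) = T1"
    by (simp_all add: gcomp_def)
  have "psi scale T0 T1 \<delta> br N x y z =
    Pf br N x0 y0 z0 + Pf br N x0 y0 z1 + Pf br N x0 y1 z0 + Pf br N x0 y1 z1 +
    Pf br N x1 y0 z0 + Pf br N x1 y0 z1 + Pf br N x1 y1 z0 + Pf br N x1 y1 z1"
    unfolding psi_def using x(1-4) y(1-4) z(1-4)
    by (simp add: psi_hom_eq g0 g1)
  also have "\<dots> = Pf br N x y z"
    unfolding x(5) y(5) z(5) Pf_def by (simp add: lin_rules algebra_simps)
  finally show ?thesis .
qed

lemma Pf_lin:
  "Pf br N (x + y) b c = Pf br N x b c + Pf br N y b c"
  "Pf br N b (x + y) c = Pf br N b x c + Pf br N b y c"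
  "Pf br N b c (x + y) = Pf br N b c x + Pf br N b c y"
  "Pf br N (r *s x) b c = r *s Pf br N x b c"
  "Pf br N b (r *s x) c = r *s Pf br N b x c"
  "Pf br N b c (r *s x) = r *s Pf br N b c x"
  "Pf br N (x - y) b c = Pf br N x b c - Pf br N y b c"
  "Pf br N b (x - y) c = Pf br N b x c - Pf br N b y c"
  "Pf br N b c (x - y) = Pf br N b c x - Pf br N b c y"
  unfolding Pf_def by (simp_all add: lin_rules algebra_simps)

lemma deformed_eq: "deformed scale T0 T1 \<delta> br N lam = (\<lambda>x y z. br x y z + lam *s Pf br N x y z)"
  by (intro ext) (simp add: deformed_def psi_eq)

lemma triv: "trivial_deformation scale br (deformed scale T0 T1 \<delta> br N)"
  unfolding trivial_deformation_def
proof (intro exI conjI allI)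
  show "Vector_Spaces.linear scale scale N" by (rule linN)
  fix lam x1 x2 x3
  show "let \<phi> = (\<lambda>x. x + lam *s N x) in
           \<phi> (deformed scale T0 T1 \<delta> br N lam x1 x2 x3) = br (\<phi> x1) (\<phi> x2) (\<phi> x3)"
    unfolding Let_def deformed_eq Pf_def by (simp add: lin_rules nij N3 algebra_simps)
qed

lemma J2_expand:
  "J2 scale \<delta> (\<lambda>x y z. br x y z + lam *s Pf br N x y z) (\<lambda>x y z. br x y z + lam *s Pf br N x y z) i j k l a b c d e
   = J2 scale \<delta> br br i j k l a b c d e
     + lam *s (J2 scale \<delta> br (Pf br N) i j k l a b c d e + J2 scale \<delta> (Pf br N) br i j k l a b c d e)
     + (lam * lam) *s J2 scale \<delta> (Pf br N) (Pf br N) i j k l a b c d e"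
  unfolding J2_def by (simp add: lin_rules Pf_lin algebra_simps)

lemma FI_def:
  assumes "a \<in> gcomp T0 T1 i" "b \<in> gcomp T0 T1 j" "c \<in> gcomp T0 T1 k"
    "d \<in> gcomp T0 T1 l" "e \<in> gcomp T0 T1 m"
  shows "J2 scale \<delta> (\<lambda>x y z. br x y z + lam *s Pf br N x y z) (\<lambda>x y z. br x y z + lam *s Pf br N x y z) i j k l a b c d e = 0"
proof -
  note g = assms gc_N[OF assms(1)] gc_N[OF assms(2)] gc_N[OF assms(3)] gc_N[OF assms(4)] gc_N[OF assms(5)]
  have w1: "J2 scale \<delta> br (Pf br N) i j k l a b c d e + J2 scale \<delta> (Pf br N) br i j k l a b c d e = 0"
    unfolding omega1 using g by (simp add: FI[of _ i _ j _ k _ l _ m] lin_rules)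
  have w2: "J2 scale \<delta> (Pf br N) (Pf br N) i j k l a b c d e = 0"
  proof -
    have "J2 scale \<delta> (Pf br N) (Pf br N) i j k l a b c d e
      = J2 scale \<delta> (Pf br N) (Pf br N) i j k l a b c d e
   + N (J2 scale \<delta> br (Pf br N) i j k l a b c d e + J2 scale \<delta> (Pf br N) br i j k l a b c d e)"
      using w1 by (simp add: lin_rules)
    also have "\<dots> = 0" unfolding omega2 using g by (simp add: FI[of _ i _ j _ k _ l _ m])
    finally show ?thesis .
  qed
  show ?thesis unfolding J2_expand using w1 w2 FI[OF assms] by simp
qed

lemma deformed_JLSTS: "JLSTS scale T0 T1 \<delta> (deformed scale T0 T1 \<delta> br N lam)"
proof -
  let ?D = "\<lambda>x y z. br x y z + lam *s Pf br N x y z"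
  have tr: "trilinear scale ?D"
    unfolding trilinear_def linear_iff using vs
    by (simp add: Pf_lin lin_rules algebra_simps)
  have hom: "?D a b c \<in> gcomp T0 T1 (i + j + k) \<and>
        ?D b a c = - (\<delta> * sg (i * j)) *s ?D a b c \<and>
        (sg (i * k)) *s ?D a b c + (sg (j * i)) *s ?D b c a + (sg (k * j)) *s ?D c a b = 0"
    if h: "a \<in> gcomp T0 T1 i" "b \<in> gcomp T0 T1 j" "c \<in> gcomp T0 T1 k" for i j k a b c
  proof (intro conjI)
    note g = h gc_N[OF h(1)] gc_N[OF h(2)] gc_N[OF h(3)]
    show "?D a b c \<in> gcomp T0 T1 (i + j + k)"
      unfolding Pf_def
      by (intro gc_add gc_scale gc_diff gc_N hom3(1) g)
    have A0: "br b a c = - (\<delta> * sg (i * j)) *s br a b c" using hom3(2)[OF h] .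
    have A1: "br (N b) a c = - (\<delta> * sg (i * j)) *s br a (N b) c" using hom3(2)[OF h(1) gc_N[OF h(2)] h(3)] .
    have A2: "br b (N a) c = - (\<delta> * sg (i * j)) *s br (N a) b c" using hom3(2)[OF gc_N[OF h(1)] h(2) h(3)] .
    have A3: "br b a (N c) = - (\<delta> * sg (i * j)) *s br a b (N c)" using hom3(2)[OF h(1) h(2) gc_N[OF h(3)]] .
    show "?D b a c = - (\<delta> * sg (i * j)) *s ?D a b c"
      unfolding Pf_def by (simp only: A0 A1 A2 A3) (simp add: lin_rules algebra_simps)
    let ?C = "\<lambda>x y z. (sg (i * k)) *s br x y z + (sg (j * i)) *s br y z x + (sg (k * j)) *s br z x y"
    have C0: "?C a b c = 0" using hom3(3)[OF h] .
    have C1: "?C (N a) b c = 0" using hom3(3)[OF gc_N[OF h(1)] h(2) h(3)] .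
    have C2: "?C a (N b) c = 0" using hom3(3)[OF h(1) gc_N[OF h(2)] h(3)] .
    have C3: "?C a b (N c) = 0" using hom3(3)[OF h(1) h(2) gc_N[OF h(3)]] .
    have "(sg (i * k)) *s ?D a b c + (sg (j * i)) *s ?D b c a + (sg (k * j)) *s ?D c a b
       = ?C a b c + lam *s (?C (N a) b c + ?C a (N b) c + ?C a b (N c) - N (?C a b c))"
      unfolding Pf_def by (simp add: lin_rules algebra_simps)
    also have "\<dots> = 0" by (simp only: C0 C1 C2 C3 lin_rules) simp
    finally show "(sg (i * k)) *s ?D a b c + (sg (j * i)) *s ?D b c a + (sg (k * j)) *s ?D c a b = 0" .
  qed
  have fi: "?D a b (?D c d e) = ?D (?D a b c) d e + (sg (k * (i + j))) *s ?D c (?D a b d) e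
          + (\<delta> * sg ((i + j) * (k + l))) *s ?D c d (?D a b e)"
    if h: "a \<in> gcomp T0 T1 i" "b \<in> gcomp T0 T1 j" "c \<in> gcomp T0 T1 k"
        "d \<in> gcomp T0 T1 l" "e \<in> gcomp T0 T1 m" for i j k l m a b c d e
  proof -
    have "J2 scale \<delta> ?D ?D i j k l a b c d e = 0" by (rule FI_def[OF h])
    then show ?thesis unfolding J2_def by (simp add: algebra_simps)
  qed
  show ?thesis
    unfolding deformed_eq JLSTS_def
    using gs dpm tr hom fi by blast
qed

end

theorem theorem5p4:
  fixes scale :: "'k::field \<Rightarrow> 'v::ab_group_add \<Rightarrow> 'v"
    and T0 T1 :: "'v set" and \<delta> :: 'k
    and br :: "'v \<Rightarrow> 'v \<Rightarrow> 'v \<Rightarrow> 'v" and N :: "'v \<Rightarrow> 'v"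
  assumes "JLSTS scale T0 T1 \<delta> br"
    and "nijenhuis scale br N"
    and "N ` T0 \<subseteq> T0" and "N ` T1 \<subseteq> T1"
  shows "(\<forall>lam. JLSTS scale T0 T1 \<delta> (deformed scale T0 T1 \<delta> br N lam))
       \<and> trivial_deformation scale br (deformed scale T0 T1 \<delta> br N)"
  using deformed_JLSTS[OF assms] triv[OF assms] by blast

end
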